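(* Let $\ell$ satisfy Assumption 1 and let $W(t)$, $t\ge0$, be a gradient flow trajectory whose initialization satisfies Assumption 2. Then for every $R>0$ there is a constant $\epsilon(R)>0$ such that for every $t\ge 1$ with $W(t)\in B(R)$ we have $\left\|\frac{\partial\mathcal{R}}{\partial W_1}(W(t))\right\|_F\ge\epsilon(R)$. Consequently, for every $R>0$ the set $\{t\ge 0: W(t)\in B(R)\}$ has finite Lebesgue measure, and $t\mapsto\max_{1\le k\le L}\|W_k(t)\|_F$ is unbounded.
   Context: Setting: data $(x_i,y_i)_{i=1}^n$ with $x_i\in\mathbb{R}^d$, $\|x_i\|\le 1$, $y_i\in\{-1,+1\}$; put $z_i:=y_ix_i$. The data are linearly separable, i.e. some unit vector $u$ has $\langle u,z_i\rangle>0$ for all $i$. Let $\gamma:=\max_{\|u\|=1}\min_{i}\langle u,z_i\rangle>0$ and let $\bar u$ be the unique unit vector attaining it. A depth-$L$ linear network is $W=(W_L,\dots,W_1)$ with $W_k\in\mathbb{R}^{d_k\times d_{k-1}}$, $d_0=d$, $d_L=1$, and $w_{\mathrm{prod}}:=(W_L\cdots W_1)^\top\in\mathbb{R}^d$. The risk is $\mathcal{R}(W)=\frac1n\sum_{i=1}^n\ell(\langle w_{\mathrm{prod}},z_i\rangle)$. For $R>0$, $B(R):=\{W:\max_{1\le k\le L}\|W_k\|_F\le R\}$. Assumption 1: $\ell:\mathbb{R}\to\mathbb{R}$ is continuously differentiable, $\ell'(x)<0$ for all $x$, $\lim_{x\to-\infty}\ell(x)=\infty$ and $\lim_{x\to\infty}\ell(x)=0$.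 Gradient flow: a $C^1$ curve $W(t)$, $t\in[0,\infty)$, with $\frac{d}{dt}W(t)=-\nabla\mathcal{R}(W(t))$. Assumption 2: $\nabla\mathcal{R}(W(0))\neq 0$ and $\mathcal{R}(W(0))\le \ell(0)$. *)

theory Defs
  imports "HOL-Analysis.Analysis"
begin

text \<open>Parameters of a depth-L linear network are encoded as
  W :: nat => nat => nat => real, where W k a b is entry (a,b) of the matrix W_k
  (k in {1..L}, a < dims k, b < dims (k-1)); other entries are irrelevant.
  Data: z i j is the j-th coordinate of z_i = y_i x_i (i < n, j < d).\<close>

type_synonym params = "nat \<Rightarrow> nat \<Rightarrow> nat \<Rightarrow> real"

definition valid_entry :: "nat \<Rightarrow> (nat \<Rightarrow> nat) \<Rightarrow> nat \<Rightarrow> nat \<Rightarrow> nat \<Rightarrow> bool" where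
  "valid_entry L dims k a b \<longleftrightarrow> 1 \<le> k \<and> k \<le> L \<and> a < dims k \<and> b < dims (k - 1)"

fun prodmat :: "(nat \<Rightarrow> nat) \<Rightarrow> nat \<Rightarrow> params \<Rightarrow> nat \<Rightarrow> nat \<Rightarrow> nat \<Rightarrow> real" where
  "prodmat dims d W 0 a j = (if a = j then 1 else 0)"
| "prodmat dims d W (Suc k) a j = (\<Sum>b<dims k. W (Suc k) a b * prodmat dims d W k b j)"

text \<open>w_prod = (W_L ... W_1)^T, a vector in R^d (d_L = 1).\<close>
definition wprod :: "nat \<Rightarrow> (nat \<Rightarrow> nat) \<Rightarrow> nat \<Rightarrow> params \<Rightarrow> nat \<Rightarrow> real" where
  "wprod L dims d W j = prodmat dims d W L 0 j"

definition risk :: "(real \<Rightarrow> real) \<Rightarrow> nat \<Rightarrow> nat \<Rightarrow> (nat \<Rightarrow> nat \<Rightarrow> real)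
    \<Rightarrow> nat \<Rightarrow> (nat \<Rightarrow> nat) \<Rightarrow> params \<Rightarrow> real" where
  "risk lf n d z L dims W = (1 / real n) * (\<Sum>i<n. lf (\<Sum>j<d. wprod L dims d W j * z i j))"

definition upd_entry :: "params \<Rightarrow> nat \<Rightarrow> nat \<Rightarrow> nat \<Rightarrow> real \<Rightarrow> params" where
  "upd_entry W k a b s = (\<lambda>k' a' b'. if (k', a', b') = (k, a, b) then W k a b + s else W k' a' b')"

definition pderiv_entry :: "(params \<Rightarrow> real) \<Rightarrow> params \<Rightarrow> nat \<Rightarrow> nat \<Rightarrow> nat \<Rightarrow> real" where
  "pderiv_entry f W k a b = deriv (\<lambda>s. f (upd_entry W k a b s)) 0"

definition frob_layer :: "(nat \<Rightarrow> nat) \<Rightarrow> params \<Rightarrow> nat \<Rightarrow> real" where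
  "frob_layer dims W k = sqrt (\<Sum>a<dims k. \<Sum>b<dims (k - 1). (W k a b)\<^sup>2)"

definition maxnorm :: "nat \<Rightarrow> (nat \<Rightarrow> nat) \<Rightarrow> params \<Rightarrow> real" where
  "maxnorm L dims W = Max ((\<lambda>k. frob_layer dims W k) ` {1..L})"

definition inB :: "nat \<Rightarrow> (nat \<Rightarrow> nat) \<Rightarrow> real \<Rightarrow> params \<Rightarrow> bool" where
  "inB L dims R W \<longleftrightarrow> maxnorm L dims W \<le> R"

definition grad_W1_norm :: "(nat \<Rightarrow> nat) \<Rightarrow> (params \<Rightarrow> real) \<Rightarrow> params \<Rightarrow> real" where
  "grad_W1_norm dims f W = sqrt (\<Sum>a<dims 1. \<Sum>b<dims 0. (pderiv_entry f W 1 a b)\<^sup>2)"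

end

theory Submission
  imports Defs
begin


fun dprod :: "(nat \<Rightarrow> nat) \<Rightarrow> nat \<Rightarrow> params \<Rightarrow> params \<Rightarrow> nat \<Rightarrow> nat \<Rightarrow> nat \<Rightarrow> real" where
  "dprod dims d W V 0 a j = 0"
| "dprod dims d W V (Suc k) a j = (\<Sum>b<dims k. V (Suc k) a b * prodmat dims d W k b j + W (Suc k) a b * dprod dims d W V k b j)"

fun Qm :: "(nat \<Rightarrow> nat) \<Rightarrow> params \<Rightarrow> nat \<Rightarrow> nat \<Rightarrow> nat \<Rightarrow> real" where
  "Qm dims W 0 a a' = (if a = a' then 1 else 0)"
| "Qm dims W (Suc k) a a' = (\<Sum>b<dims (Suc k). W (Suc (Suc k)) a b * Qm dims W k b a')"

definition ind :: "nat \<Rightarrow> nat \<Rightarrow> nat \<Rightarrow> params" where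
  "ind k a b = (\<lambda>k' a' b'. if (k', a', b') = (k, a, b) then 1 else 0)"

locale net =
  fixes n d L :: nat and dims :: "nat \<Rightarrow> nat" and z :: "nat \<Rightarrow> nat \<Rightarrow> real" and lf dl :: "real \<Rightarrow> real"
  assumes L_pos: "1 \<le> L" and dims0: "dims 0 = d" and dims_pos: "\<forall>k. 0 < dims k"
    and l_deriv: "\<forall>s. (lf has_real_derivative dl s) (at s)"
begin

definition marg :: "params \<Rightarrow> nat \<Rightarrow> real" where
  "marg W i = (\<Sum>j<d. wprod L dims d W j * z i j)"

definition Drisk :: "params \<Rightarrow> params \<Rightarrow> real" where
  "Drisk W V = (1 / real n) * (\<Sum>i<n. dl (marg W i) * (\<Sum>j<d. dprod dims d W V L 0 j * z i j))"

definition G :: "params \<Rightarrow> nat \<Rightarrow> nat \<Rightarrow> nat \<Rightarrow> real" where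
  "G W k a b = Drisk W (ind k a b)"

definition Valid :: "(nat \<times> nat \<times> nat) set" where
  "Valid = {(k, a, b). valid_entry L dims k a b}"

lemma Valid_eq: "Valid = Sigma {1..L} (\<lambda>k. {..<dims k} \<times> {..<dims (k - 1)})"
  unfolding Valid_def valid_entry_def by auto

lemma finite_Valid: "finite Valid"
  unfolding Valid_eq by auto

definition gsq :: "params \<Rightarrow> real" where
  "gsq W = (\<Sum>(k, a, b)\<in>Valid. (G W k a b)\<^sup>2)"

lemma chain_prod:
  assumes der: "\<And>k a b. valid_entry L dims k a b \<Longrightarrow>
      ((\<lambda>s. C s k a b) has_real_derivative V k a b) (at x within S)"
  shows "k \<le> L \<Longrightarrow> a < dims k \<Longrightarrow>
     ((\<lambda>s. prodmat dims d (C s) k a j) has_real_derivative dprod dims d (C x) V k a j) (at x within S)"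
proof (induction k arbitrary: a)
  case 0
  then show ?case by simp
next
  case (Suc k)
  have "((\<lambda>s. \<Sum>b<dims k. C s (Suc k) a b * prodmat dims d (C s) k b j)
     has_real_derivative (\<Sum>b<dims k. V (Suc k) a b * prodmat dims d (C x) k b j + C x (Suc k) a b * dprod dims d (C x) V k b j)) (at x within S)"
  proof (rule DERIV_sum)
    fix b assume b: "b \<in> {..<dims k}"
    have v: "valid_entry L dims (Suc k) a b" using Suc.prems b unfolding valid_entry_def by auto
    have "((\<lambda>s. C s (Suc k) a b * prodmat dims d (C s) k b j) has_real_derivative
       V (Suc k) a b * prodmat dims d (C x) k b j + C x (Suc k) a b * dprod dims d (C x) V k b j) (at x within S)"
      using DERIV_mult[OF der[OF v] Suc.IH[of b]] Suc.prems b by (simp add: mult.commute)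
    then show "((\<lambda>s. C s (Suc k) a b * prodmat dims d (C s) k b j) has_real_derivative
       V (Suc k) a b * prodmat dims d (C x) k b j + C x (Suc k) a b * dprod dims d (C x) V k b j) (at x within S)" .
  qed
  then show ?case by simp
qed

lemma chain_risk:
  assumes der: "\<And>k a b. valid_entry L dims k a b \<Longrightarrow>
      ((\<lambda>s. C s k a b) has_real_derivative V k a b) (at x within S)"
  shows "((\<lambda>s. risk lf n d z L dims (C s)) has_real_derivative Drisk (C x) V) (at x within S)"
proof -
  have L0: "0 < dims L" using dims_pos by auto
  have m: "((\<lambda>s. marg (C s) i) has_real_derivative (\<Sum>j<d. dprod dims d (C x) V L 0 j * z i j)) (at x within S)" for i
    unfolding marg_def wprod_def
  proof (rule DERIV_sum)
    fix j assume "j \<in> {..<d}"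
    show "((\<lambda>s. prodmat dims d (C s) L 0 j * z i j) has_real_derivative dprod dims d (C x) V L 0 j * z i j) (at x within S)"
      using DERIV_mult[OF chain_prod[OF der, where k=L and a=0 and j=j] DERIV_const[of "z i j"]] L0 by simp
  qed
  have "((\<lambda>s. (1 / real n) * (\<Sum>i<n. lf (marg (C s) i))) has_real_derivative Drisk (C x) V) (at x within S)"
    unfolding Drisk_def
    apply (rule DERIV_cmult)
    apply (rule DERIV_sum)
    apply (rule DERIV_chain2[OF _ m])
    using l_deriv by auto
  then show ?thesis unfolding risk_def marg_def .
qed

lemma pderiv_G: "pderiv_entry (risk lf n d z L dims) W k a b = G W k a b"
proof -
  have der: "((\<lambda>s. upd_entry W k a b s k' a' b') has_real_derivative ind k a b k' a' b') (at 0)" for k' a' b'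
  proof (cases "(k', a', b') = (k, a, b)")
    case True
    then show ?thesis unfolding upd_entry_def ind_def
      by (auto intro!: derivative_eq_intros)
  next
    case False
    then show ?thesis unfolding upd_entry_def ind_def
      by (simp only: if_False) (rule DERIV_const)
  qed
  have u0: "upd_entry W k a b 0 = W" unfolding upd_entry_def by (auto simp: fun_eq_iff)
  have "((\<lambda>s. risk lf n d z L dims (upd_entry W k a b s)) has_real_derivative G W k a b) (at 0)"
    using chain_risk[where C="upd_entry W k a b" and V="ind k a b" and x=0 and S=UNIV, OF der] u0
    unfolding G_def by simp
  then show ?thesis unfolding pderiv_entry_def by (rule DERIV_imp_deriv)
qed

lemma dprod_lin:
  "dprod dims d W (\<lambda>k a b. \<Sum>e\<in>E. f e * g e k a b) k a j = (\<Sum>e\<in>E. f e * dprod dims d W (g e) k a j)"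
proof (induction k arbitrary: a)
  case 0
  then show ?case by simp
next
  case (Suc k)
  show ?case
    by (simp add: Suc.IH sum_distrib_left sum_distrib_right sum.distrib algebra_simps sum.swap[of _ E])
qed

lemma dprod_local:
  "(\<And>k' a' b'. valid_entry L dims k' a' b' \<Longrightarrow> k' \<le> k \<Longrightarrow> V k' a' b' = V' k' a' b') \<Longrightarrow>
    k \<le> L \<Longrightarrow> a < dims k \<Longrightarrow> dprod dims d W V k a j = dprod dims d W V' k a j"
proof (induction k arbitrary: a)
  case 0
  then show ?case by simp
next
  case (Suc k)
  have "V (Suc k) a b = V' (Suc k) a b" if "b < dims k" for b
    using Suc.prems that by (auto simp: valid_entry_def)
  moreover have "dprod dims d W V k b j = dprod dims d W V' k b j" if "b < dims k" for b
    using Suc.prems that by (intro Suc.IH) auto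
  ultimately show ?case by simp
qed

lemma Drisk_decomp: "Drisk W V = (\<Sum>(k, a, b)\<in>Valid. V k a b * G W k a b)"
proof -
  define V0 where "V0 = (\<lambda>k a b. \<Sum>e\<in>Valid. V (fst e) (fst (snd e)) (snd (snd e)) * ind (fst e) (fst (snd e)) (snd (snd e)) k a b)"
  have agree: "V0 k a b = V k a b" if "valid_entry L dims k a b" for k a b
  proof -
    have "V0 k a b = (\<Sum>e\<in>Valid. if e = (k, a, b) then V k a b else 0)"
      unfolding V0_def ind_def by (intro sum.cong) auto
    also have "\<dots> = V k a b" using that finite_Valid by (simp add: Valid_def)
    finally show ?thesis .
  qed
  have L0: "0 < dims L" using dims_pos by auto
  have dp: "dprod dims d W V L 0 j = (\<Sum>e\<in>Valid. V (fst e) (fst (snd e)) (snd (snd e)) * dprod dims d W (ind (fst e) (fst (snd e)) (snd (snd e))) L 0 j)" for j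
  proof -
    have "dprod dims d W V L 0 j = dprod dims d W V0 L 0 j"
      using L0 by (intro dprod_local) (auto simp: agree)
    also have "\<dots> = (\<Sum>e\<in>Valid. V (fst e) (fst (snd e)) (snd (snd e)) * dprod dims d W (ind (fst e) (fst (snd e)) (snd (snd e))) L 0 j)" unfolding V0_def by (rule dprod_lin)
    finally show ?thesis .
  qed
  have "Drisk W V = (\<Sum>e\<in>Valid. V (fst e) (fst (snd e)) (snd (snd e)) * G W (fst e) (fst (snd e)) (snd (snd e)))"
    unfolding Drisk_def G_def dp
    by (simp add: sum_distrib_left sum_distrib_right algebra_simps sum.swap[of _ Valid])
  also have "\<dots> = (\<Sum>(k, a, b)\<in>Valid. V k a b * G W k a b)"
    by (intro sum.cong) auto
  finally show ?thesis .
qed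

lemma flow_deriv:
  assumes flow: "\<forall>t\<ge>0. \<forall>k a b. valid_entry L dims k a b \<longrightarrow>
                 ((\<lambda>s. W s k a b) has_real_derivative
                   - pderiv_entry (risk lf n d z L dims) (W t) k a b) (at t within {0..})"
    and t: "0 \<le> t"
  shows "((\<lambda>s. risk lf n d z L dims (W s)) has_real_derivative - gsq (W t)) (at t within {0..})"
proof -
  have "((\<lambda>s. risk lf n d z L dims (W s)) has_real_derivative Drisk (W t) (\<lambda>k a b. - G (W t) k a b)) (at t within {0..})"
    by (rule chain_risk) (use flow t pderiv_G in auto)
  also have "Drisk (W t) (\<lambda>k a b. - G (W t) k a b) = - gsq (W t)"
    unfolding Drisk_decomp gsq_def
    by (simp add: sum_negf[symmetric] case_prod_beta power2_eq_square)
  finally show ?thesis .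
qed

lemma dprod_ind1: "b < d \<Longrightarrow> dprod dims d W (ind 1 a b) (Suc k) a' j = Qm dims W k a' a * (if b = j then 1 else 0)"
proof (induction k arbitrary: a')
  case 0
  have "dprod dims d W (ind 1 a b) (Suc 0) a' j = (\<Sum>b0<d. if b0 = b \<and> a' = a \<and> b0 = j then 1 else 0)"
    by (simp add: dims0 ind_def) (intro sum.cong; auto)
  also have "\<dots> = (if a' = a \<and> b = j then 1 else 0)"
    using 0 by (auto simp: sum.delta' cong: conj_cong)
  finally show ?case by simp
next
  case (Suc k)
  then show ?case by (simp add: ind_def sum_distrib_right mult.assoc)
qed

lemma prod_Q: "j < d \<Longrightarrow> a' < dims (Suc k) \<Longrightarrow>
   prodmat dims d W (Suc k) a' j = (\<Sum>a<dims 1. Qm dims W k a' a * W 1 a j)"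
proof (induction k arbitrary: a')
  case 0
  have "prodmat dims d W (Suc 0) a' j = (\<Sum>b<d. W 1 a' b * (if b = j then 1 else 0))"
    by (simp add: dims0)
  also have "\<dots> = (\<Sum>b<d. if b = j then W 1 a' b else 0)"
    by (intro sum.cong) auto
  also have "\<dots> = W 1 a' j" using 0 by simp
  also have "\<dots> = (\<Sum>a<dims 1. if a' = a then W 1 a j else 0)" using 0 by simp
  also have "\<dots> = (\<Sum>a<dims 1. Qm dims W 0 a' a * W 1 a j)" by (intro sum.cong) auto
  finally show ?case .
next
  case (Suc k)
  have "prodmat dims d W (Suc (Suc k)) a' j = (\<Sum>b<dims (Suc k). W (Suc (Suc k)) a' b * (\<Sum>a<dims 1. Qm dims W k b a * W 1 a j))"
    using Suc by simp
  also have "\<dots> = (\<Sum>a<dims 1. Qm dims W (Suc k) a' a * W 1 a j)"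
    by (simp add: sum_distrib_left sum_distrib_right mult.assoc) (rule sum.swap)
  finally show ?case .
qed

definition gv :: "params \<Rightarrow> nat \<Rightarrow> real" where
  "gv W b = (1 / real n) * (\<Sum>i<n. dl (marg W i) * z i b)"

lemma G1: "a < dims 1 \<Longrightarrow> b < d \<Longrightarrow> G W 1 a b = Qm dims W (L - 1) 0 a * gv W b"
proof -
  assume a: "a < dims 1" and b: "b < d"
  have LL: "L = Suc (L - 1)" using L_pos by simp
  have "(\<Sum>j<d. dprod dims d W (ind 1 a b) L 0 j * z i j) = Qm dims W (L - 1) 0 a * z i b" for i
  proof -
    have "(\<Sum>j<d. dprod dims d W (ind 1 a b) L 0 j * z i j) = (\<Sum>j<d. if b = j then Qm dims W (L - 1) 0 a * z i j else 0)"
    proof (intro sum.cong refl)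
      fix j assume "j \<in> {..<d}"
      have e: "dprod dims d W (ind 1 a b) L 0 j = Qm dims W (L-1) 0 a * (if b = j then 1 else 0)"
        using dprod_ind1[OF b, of W a "L-1" 0 j] LL by simp
      show "dprod dims d W (ind 1 a b) L 0 j * z i j = (if b = j then Qm dims W (L - 1) 0 a * z i j else 0)"
        unfolding e by simp
    qed
    also have "\<dots> = Qm dims W (L - 1) 0 a * z i b" using b by simp
    finally show ?thesis .
  qed
  then show ?thesis unfolding G_def Drisk_def gv_def
    by (simp add: sum_distrib_left algebra_simps)
qed

lemma marg_Q: "marg W i = (\<Sum>a<dims 1. Qm dims W (L - 1) 0 a * (\<Sum>j<d. W 1 a j * z i j))"
proof -
  have LL: "L = Suc (L - 1)" using L_pos by simp
  have L0: "0 < dims (Suc (L - 1))" using dims_pos by auto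
  have "marg W i = (\<Sum>j<d. (\<Sum>a<dims 1. Qm dims W (L - 1) 0 a * W 1 a j) * z i j)"
    unfolding marg_def wprod_def by (subst LL, intro sum.cong refl, subst prod_Q) (use L0 in auto)
  then show ?thesis by (simp add: sum_distrib_left sum_distrib_right mult.assoc) (rule sum.swap)
qed

lemma entry_bound:
  assumes B: "inB L dims R W" and v: "valid_entry L dims k a b"
  shows "\<bar>W k a b\<bar> \<le> R"
proof -
  from v have k: "k \<in> {1..L}" and a: "a < dims k" and b: "b < dims (k - 1)" by (auto simp: valid_entry_def)
  have "(W k a b)\<^sup>2 \<le> (\<Sum>b'<dims (k - 1). (W k a b')\<^sup>2)"
    using b by (intro member_le_sum) auto
  also have "\<dots> \<le> (\<Sum>a'<dims k. \<Sum>b'<dims (k - 1). (W k a' b')\<^sup>2)"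
    using a by (intro member_le_sum[where f="\<lambda>a'. \<Sum>b'<dims (k - 1). (W k a' b')\<^sup>2"]) (auto intro: sum_nonneg)
  finally have "\<bar>W k a b\<bar> \<le> frob_layer dims W k"
    unfolding frob_layer_def by (metis real_sqrt_abs real_sqrt_le_mono)
  also have "\<dots> \<le> maxnorm L dims W"
    unfolding maxnorm_def using k by (intro Max_ge) auto
  also have "\<dots> \<le> R" using B by (simp add: inB_def)
  finally show ?thesis .
qed

definition Mb :: "real \<Rightarrow> nat \<Rightarrow> real" where
  "Mb R k = R ^ k * (\<Prod>i<k. real (dims i))"

lemma prod_bound:
  assumes B: "inB L dims R W" and R: "0 \<le> R" and j: "j < d"
  shows "k \<le> L \<Longrightarrow> a < dims k \<Longrightarrow> \<bar>prodmat dims d W k a j\<bar> \<le> Mb R k"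
proof (induction k arbitrary: a)
  case 0
  then show ?case by (simp add: Mb_def)
next
  case (Suc k)
  have "\<bar>prodmat dims d W (Suc k) a j\<bar> \<le> (\<Sum>b<dims k. \<bar>W (Suc k) a b\<bar> * \<bar>prodmat dims d W k b j\<bar>)"
    by (simp add: abs_mult[symmetric] sum_abs)
  also have "\<dots> \<le> (\<Sum>b<dims k. R * Mb R k)"
  proof (intro sum_mono mult_mono)
    fix b assume b: "b \<in> {..<dims k}"
    show "\<bar>W (Suc k) a b\<bar> \<le> R" using Suc.prems b by (intro entry_bound[OF B]) (auto simp: valid_entry_def)
    show "\<bar>prodmat dims d W k b j\<bar> \<le> Mb R k" using Suc.prems b by (intro Suc.IH) auto
  qed (use R in auto)
  also have "\<dots> = Mb R (Suc k)" by (simp add: Mb_def)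
  finally show ?case .
qed

definition Zs :: real where "Zs = (\<Sum>i<n. \<Sum>j<d. \<bar>z i j\<bar>)"

lemma z_le_Zs: "i < n \<Longrightarrow> j < d \<Longrightarrow> \<bar>z i j\<bar> \<le> Zs"
proof -
  assume i: "i < n" and j: "j < d"
  have "\<bar>z i j\<bar> \<le> (\<Sum>j<d. \<bar>z i j\<bar>)" using j by (intro member_le_sum) auto
  also have "\<dots> \<le> Zs" unfolding Zs_def using i
    by (intro member_le_sum[where f="\<lambda>i. \<Sum>j<d. \<bar>z i j\<bar>"]) (auto intro: sum_nonneg)
  finally show ?thesis .
qed

lemma marg_bound:
  assumes B: "inB L dims R W" and R: "0 \<le> R" and i: "i < n"
  shows "\<bar>marg W i\<bar> \<le> real d * Mb R L * Zs"
proof -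
  have L0: "0 < dims L" using dims_pos by auto
  have "\<bar>marg W i\<bar> \<le> (\<Sum>j<d. \<bar>wprod L dims d W j\<bar> * \<bar>z i j\<bar>)"
    unfolding marg_def by (simp add: abs_mult[symmetric] sum_abs)
  also have "\<dots> \<le> (\<Sum>j<d. Mb R L * Zs)"
  proof (intro sum_mono mult_mono)
    fix j assume j: "j \<in> {..<d}"
    show "\<bar>wprod L dims d W j\<bar> \<le> Mb R L" unfolding wprod_def
      using prod_bound[OF B R, of j L 0] j L0 by auto
    show "\<bar>z i j\<bar> \<le> Zs" using i j z_le_Zs by auto
    show "0 \<le> Mb R L" using R dims_pos by (simp add: Mb_def prod_nonneg)
  qed auto
  finally show ?thesis by simp
qed

lemma inner_bound:
  assumes B: "inB L dims R W" and R: "0 \<le> R" and i: "i < n" and a: "a < dims 1"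
  shows "\<bar>\<Sum>j<d. W 1 a j * z i j\<bar> \<le> R * Zs"
proof -
  have "\<bar>\<Sum>j<d. W 1 a j * z i j\<bar> \<le> (\<Sum>j<d. R * \<bar>z i j\<bar>)"
  proof -
    have "\<bar>\<Sum>j<d. W 1 a j * z i j\<bar> \<le> (\<Sum>j<d. \<bar>W 1 a j\<bar> * \<bar>z i j\<bar>)"
      by (simp add: abs_mult[symmetric] sum_abs)
    also have "\<dots> \<le> (\<Sum>j<d. R * \<bar>z i j\<bar>)"
      using L_pos a dims0 by (intro sum_mono mult_right_mono entry_bound[OF B]) (auto simp: valid_entry_def)
    finally show ?thesis .
  qed
  also have "\<dots> = R * (\<Sum>j<d. \<bar>z i j\<bar>)" by (simp add: sum_distrib_left)
  also have "\<dots> \<le> R * Zs" unfolding Zs_def using i R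
    by (intro mult_left_mono member_le_sum[where f="\<lambda>i. \<Sum>j<d. \<bar>z i j\<bar>"]) (auto intro: sum_nonneg)
  finally show ?thesis .
qed

lemma gW1_eq: "grad_W1_norm dims (risk lf n d z L dims) W =
   sqrt ((\<Sum>a<dims 1. (Qm dims W (L - 1) 0 a)\<^sup>2) * (\<Sum>b<d. (gv W b)\<^sup>2))"
proof -
  have "(\<Sum>a<dims 1. \<Sum>b<dims 0. (pderiv_entry (risk lf n d z L dims) W 1 a b)\<^sup>2)
      = (\<Sum>a<dims 1. \<Sum>b<d. (Qm dims W (L - 1) 0 a)\<^sup>2 * (gv W b)\<^sup>2)"
    unfolding dims0 pderiv_G by (intro sum.cong refl) (auto simp: G1[simplified] power_mult_distrib)
  also have "\<dots> = (\<Sum>a<dims 1. (Qm dims W (L - 1) 0 a)\<^sup>2) * (\<Sum>b<d. (gv W b)\<^sup>2)"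
    by (simp add: sum_product)
  finally show ?thesis unfolding grad_W1_norm_def by simp
qed

lemma gsq_ge: "(grad_W1_norm dims (risk lf n d z L dims) W)\<^sup>2 \<le> gsq W"
proof -
  let ?f = "\<lambda>(k, a, b). (G W k a b)\<^sup>2"
  let ?h = "\<lambda>(a::nat, b::nat). (1::nat, a, b)"
  have "(grad_W1_norm dims (risk lf n d z L dims) W)\<^sup>2 = (\<Sum>a<dims 1. \<Sum>b<d. (G W 1 a b)\<^sup>2)"
    unfolding grad_W1_norm_def dims0 pderiv_G by (simp add: sum_nonneg)
  also have "\<dots> = (\<Sum>p\<in>{..<dims 1} \<times> {..<d}. ?f (?h p))"
    by (simp add: sum.cartesian_product)
  also have "\<dots> = sum ?f (?h ` ({..<dims 1} \<times> {..<d}))"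
    by (subst sum.reindex) (auto simp: inj_on_def intro!: sum.cong)
  also have "\<dots> \<le> sum ?f Valid"
    using L_pos dims0 by (intro sum_mono2 finite_Valid) (auto simp: Valid_def valid_entry_def)
  also have "\<dots> = gsq W" unfolding gsq_def ..
  finally show ?thesis .
qed

end

locale flowsys = net +
  fixes W :: "real \<Rightarrow> params" and u :: "nat \<Rightarrow> real"
  assumes flow: "\<forall>t\<ge>0. \<forall>k a b. valid_entry L dims k a b \<longrightarrow>
                 ((\<lambda>s. W s k a b) has_real_derivative
                   - pderiv_entry (risk lf n d z L dims) (W t) k a b) (at t within {0..})"
    and grad0: "\<exists>k a b. valid_entry L dims k a b \<and>
                  pderiv_entry (risk lf n d z L dims) (W 0) k a b \<noteq> 0"
    and risk0: "risk lf n d z L dims (W 0) \<le> lf 0"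
    and dl_cont: "continuous_on UNIV dl" and dl_neg: "\<forall>s. dl s < 0"
    and l_top: "(lf \<longlongrightarrow> 0) at_top"
    and sep: "\<forall>i<n. (\<Sum>j<d. u j * z i j) > 0"
begin

definition rr :: "real \<Rightarrow> real" where "rr t = risk lf n d z L dims (W t)"

lemma n_pos: "0 < n"
proof (rule ccontr)
  assume "\<not> 0 < n"
  then have "n = 0" by simp
  then have "pderiv_entry (risk lf n d z L dims) W' k a b = 0" for W' k a b
    unfolding pderiv_G G_def Drisk_def by simp
  then show False using grad0 by auto
qed

lemma lf_dec: "a < b \<Longrightarrow> lf b < lf a"
  by (rule DERIV_neg_imp_decreasing) (use l_deriv dl_neg in auto)

lemma lf_pos: "0 < lf s"
proof (rule ccontr)
  assume "\<not> 0 < lf s"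
  then have h: "lf (s + 1) < 0" using lf_dec[of s "s + 1"] by simp
  have "eventually (\<lambda>x. lf x \<le> lf (s + 1)) at_top"
    unfolding eventually_at_top_linorder
    by (rule exI[of _ "s + 1"]) (auto simp: le_less dest: lf_dec)
  then have "0 \<le> lf (s + 1)" by (rule tendsto_upperbound[OF l_top]) simp
  then show False using h by simp
qed

lemma risk_nonneg: "0 \<le> risk lf n d z L dims W'"
  unfolding risk_def by (intro mult_nonneg_nonneg sum_nonneg) (auto intro: less_imp_le[OF lf_pos])

lemma gsq_nonneg: "0 \<le> gsq W'"
  unfolding gsq_def by (intro sum_nonneg) auto

lemma rr_deriv: "0 \<le> t \<Longrightarrow> (rr has_real_derivative - gsq (W t)) (at t within {0..})"
  unfolding rr_def by (rule flow_deriv[OF flow])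

lemma rr_cont: "continuous_on {0..} rr"
  unfolding continuous_on_eq_continuous_within
  using rr_deriv DERIV_continuous by (metis atLeast_iff)

lemma rr_mono: assumes a0: "0 \<le> a" and ab: "a \<le> b" shows "rr b \<le> rr a"
proof (rule DERIV_nonpos_imp_decreasing_open[OF ab])
  fix x assume "a < x" "x < b"
  then have x: "0 < x" using a0 by simp
  have "(rr has_real_derivative - gsq (W x)) (at x within {0<..})"
    using rr_deriv[of x] x by (auto intro: DERIV_subset)
  then have "(rr has_real_derivative - gsq (W x)) (at x)"
    using at_within_open[of x "{0<..}"] x by simp
  then show "\<exists>y. (rr has_real_derivative y) (at x) \<and> y \<le> 0" using gsq_nonneg by auto
next
  show "continuous_on {a..b} rr" using a0 by (intro continuous_on_subset[OF rr_cont]) auto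
qed

lemma gsq0: "0 < gsq (W 0)"
proof -
  obtain k a b where v: "valid_entry L dims k a b" and nz: "G (W 0) k a b \<noteq> 0"
    using grad0 pderiv_G by auto
  have "(G (W 0) k a b)\<^sup>2 \<le> gsq (W 0)"
    unfolding gsq_def using v finite_Valid
    by (intro member_le_sum[where f="\<lambda>(k, a, b). (G (W 0) k a b)\<^sup>2", of "(k,a,b)", simplified]) (auto simp: Valid_def)
  moreover have "0 < (G (W 0) k a b)\<^sup>2" using nz by simp
  ultimately show ?thesis by linarith
qed

lemma rr1: "rr 1 < lf 0"
proof -
  obtain \<delta> where \<delta>: "\<delta> > 0" and h: "\<forall>h>0. 0 + h \<in> {0..} \<longrightarrow> h < \<delta> \<longrightarrow> rr 0 > rr (0 + h)"
    using has_real_derivative_neg_dec_right[OF rr_deriv[of 0]] gsq0 by auto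
  define h where "h = min (\<delta> / 2) 1"
  have "rr 1 \<le> rr h" using \<delta> by (intro rr_mono) (auto simp: h_def)
  also have "\<dots> < rr 0" using h \<delta> by (auto simp: h_def)
  also have "\<dots> \<le> lf 0" using risk0 by (simp add: rr_def)
  finally show ?thesis .
qed

lemma Mb_nonneg: "0 \<le> R \<Longrightarrow> 0 \<le> Mb R k"
  using dims_pos by (simp add: Mb_def prod_nonneg)

lemma Zs_nonneg: "0 \<le> Zs" unfolding Zs_def by (intro sum_nonneg) auto

lemma claim1:
  assumes R: "0 < R"
  shows "\<exists>\<epsilon>>0. \<forall>t\<ge>1. inB L dims R (W t) \<longrightarrow> grad_W1_norm dims (risk lf n d z L dims) (W t) \<ge> \<epsilon>"
proof -
  define K where "K = real d * Mb R L * Zs"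
  have K0: "0 \<le> K" unfolding K_def using Mb_nonneg[of R L] Zs_nonneg R by simp
  obtain x0 where x0: "x0 \<in> {-K..K}" "\<forall>y\<in>{-K..K}. dl y \<le> dl x0"
    using continuous_attains_sup[of "{-K..K}" dl] K0 continuous_on_subset[OF dl_cont] by auto
  define c where "c = - dl x0"
  have c0: "0 < c" unfolding c_def using dl_neg by simp
  define P where "P = (\<Sum>i<n. \<Sum>j<d. u j * z i j)"
  have P0: "0 < P" unfolding P_def using n_pos sep by (intro sum_pos[where f="\<lambda>i. \<Sum>j<d. u j * z i j"]) auto
  define U where "U = (\<Sum>b<d. (u b)\<^sup>2)"
  have U0: "0 < U"
  proof (rule ccontr)
    assume "\<not> 0 < U"
    then have "U = 0" unfolding U_def using sum_nonneg[of "{..<d}" "\<lambda>b. (u b)\<^sup>2"] by simp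
    then have "\<forall>b\<in>{..<d}. (u b)\<^sup>2 = 0" unfolding U_def by (subst sum_nonneg_eq_0_iff[symmetric]) auto
    then have "(\<Sum>j<d. u j * z 0 j) = 0" by simp
    then show False using sep n_pos by force
  qed
  have "eventually (\<lambda>x. rr 1 < lf x) (at 0)"
    using order_tendstoD(1)[OF isCont_def[THEN iffD1, OF DERIV_isCont[OF l_deriv[rule_format]]] rr1] .
  then obtain \<delta> where \<delta>: "\<delta> > 0" "\<forall>x. x \<noteq> 0 \<and> dist x 0 < \<delta> \<longrightarrow> rr 1 < lf x"
    unfolding eventually_at by auto
  define s0 where "s0 = \<delta> / 2"
  have s00: "0 < s0" and ls0: "rr 1 < lf s0" using \<delta> by (auto simp: s0_def dist_real_def)
  define A where "A = R * Zs + 1"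
  have A0: "0 < A" unfolding A_def using R Zs_nonneg by (simp add: add_nonneg_pos)
  define \<epsilon> where "\<epsilon> = sqrt ((s0 / A)\<^sup>2 / real (dims 1) * ((c * P / real n)\<^sup>2 / U))"
  have \<epsilon>0: "0 < \<epsilon>" unfolding \<epsilon>_def using s00 A0 c0 P0 U0 n_pos dims_pos by simp
  have main: "grad_W1_norm dims (risk lf n d z L dims) (W t) \<ge> \<epsilon>" if t: "1 \<le> t" and B: "inB L dims R (W t)" for t
  proof -
    let ?W = "W t"
    let ?v = "\<lambda>a. Qm dims ?W (L - 1) 0 a"
    have rt: "risk lf n d z L dims ?W \<le> rr 1" using rr_mono[of 1 t] t by (simp add: rr_def)
    obtain i where i: "i < n" and li: "lf (marg ?W i) \<le> rr 1"
    proof (rule ccontr)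
      assume "\<not> thesis"
      then have all: "\<forall>i<n. rr 1 < lf (marg ?W i)" using that by force
      have "(\<Sum>i<n. rr 1) < (\<Sum>i<n. lf (marg ?W i))"
        using all n_pos by (intro sum_strict_mono) auto
      then have "real n * rr 1 < real n * risk lf n d z L dims ?W"
        unfolding risk_def marg_def using n_pos by simp
      then show False using rt n_pos by (simp add: mult_le_cancel_left)
    qed
    have mi: "s0 < marg ?W i"
    proof (rule ccontr)
      assume "\<not> s0 < marg ?W i"
      then have "lf s0 \<le> lf (marg ?W i)" using lf_dec[of "marg ?W i" s0] by (cases "marg ?W i = s0") auto
      then show False using li ls0 by simp
    qed
    have "marg ?W i \<le> \<bar>\<Sum>a<dims 1. ?v a * (\<Sum>j<d. W t 1 a j * z i j)\<bar>"
      unfolding marg_Q by simp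
    also have "\<dots> \<le> (\<Sum>a<dims 1. \<bar>?v a\<bar> * A)"
      unfolding abs_mult[symmetric]
      using inner_bound[OF B _ i] R by (intro order.trans[OF sum_abs] sum_mono)
        (auto simp: abs_mult A_def intro!: mult_left_mono order.trans[OF _ less_imp_le[OF less_add_one]])
    finally have "s0 / A < (\<Sum>a<dims 1. \<bar>?v a\<bar>)"
      using mi A0 by (simp add: sum_distrib_right[symmetric] pos_divide_less_eq)
    then have "(s0 / A)\<^sup>2 \<le> (\<Sum>a<dims 1. 1 * \<bar>?v a\<bar>)\<^sup>2"
      using s00 A0 by (intro power_mono) auto
    also have "\<dots> \<le> (\<Sum>a<dims 1. 1\<^sup>2) * (\<Sum>a<dims 1. \<bar>?v a\<bar>\<^sup>2)"
      by (rule Cauchy_Schwarz_ineq_sum)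
    finally have V: "(s0 / A)\<^sup>2 / real (dims 1) \<le> (\<Sum>a<dims 1. (?v a)\<^sup>2)"
      using dims_pos by (simp add: pos_divide_le_eq mult.commute)
    have dlc: "dl (marg ?W i') \<le> - c" if "i' < n" for i'
      using marg_bound[OF B _ that] R x0 unfolding c_def K_def by (auto simp: abs_le_iff)
    have "(\<Sum>b<d. gv ?W b * u b) = (1 / real n) * (\<Sum>i<n. dl (marg ?W i) * (\<Sum>j<d. u j * z i j))"
      unfolding gv_def by (simp add: sum_distrib_left sum_distrib_right algebra_simps) (rule sum.swap)
    also have "\<dots> \<le> (1 / real n) * (\<Sum>i<n. (- c) * (\<Sum>j<d. u j * z i j))"
      using dlc sep by (intro mult_left_mono sum_mono mult_right_mono) (auto intro: less_imp_le)
    also have "\<dots> = (1 / real n) * ((- c) * P)" unfolding P_def by (simp only: sum_distrib_left)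
    also have "\<dots> = - (c * P / real n)" by simp
    finally have gu: "(\<Sum>b<d. gv ?W b * u b) \<le> - (c * P / real n)" .
    have "(c * P / real n)\<^sup>2 \<le> (\<Sum>b<d. gv ?W b * u b)\<^sup>2"
    proof -
      have "(c * P / real n)\<^sup>2 \<le> (- (\<Sum>b<d. gv ?W b * u b))\<^sup>2"
        using gu c0 P0 n_pos by (intro power_mono) auto
      then show ?thesis by simp
    qed
    also have "\<dots> \<le> (\<Sum>b<d. (gv ?W b)\<^sup>2) * U" unfolding U_def by (rule Cauchy_Schwarz_ineq_sum)
    finally have Gv: "(c * P / real n)\<^sup>2 / U \<le> (\<Sum>b<d. (gv ?W b)\<^sup>2)"
      using U0 by (simp add: pos_divide_le_eq)
    have "\<epsilon> \<le> sqrt ((\<Sum>a<dims 1. (?v a)\<^sup>2) * (\<Sum>b<d. (gv ?W b)\<^sup>2))"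
      unfolding \<epsilon>_def using V Gv U0 by (intro real_sqrt_le_mono mult_mono) (auto intro: sum_nonneg)
    then show ?thesis unfolding gW1_eq .
  qed
  show ?thesis using \<epsilon>0 main by blast
qed

lemma entry_cont: "valid_entry L dims k a b \<Longrightarrow> continuous_on {0..} (\<lambda>t. W t k a b)"
  unfolding continuous_on_eq_continuous_within
  using flow DERIV_continuous by (metis atLeast_iff)

definition SS :: "real \<Rightarrow> real set" where "SS R = {t. 0 \<le> t \<and> inB L dims R (W t)}"

lemma SS_closed: "closed (SS R)"
proof -
  have fin: "finite ((\<lambda>k. frob_layer dims X k) ` {1..L})" and ne: "(\<lambda>k. frob_layer dims X k) ` {1..L} \<noteq> {}" for X
    using L_pos by auto
  have mx: "maxnorm L dims X \<le> R \<longleftrightarrow> (\<forall>k\<in>{1..L}. frob_layer dims X k \<le> R)" for X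
    unfolding maxnorm_def using Max_le_iff[OF fin ne] by simp
  have eq: "SS R = (\<Inter>k\<in>{1..L}. {t \<in> {0..}. frob_layer dims (W t) k \<le> R})"
    unfolding SS_def inB_def mx using L_pos by auto
  have "closed {t \<in> {0..}. frob_layer dims (W t) k \<le> R}" if k: "k \<in> {1..L}" for k
  proof (rule continuous_on_closed_Collect_le)
    show "continuous_on {0..} (\<lambda>t. frob_layer dims (W t) k)" unfolding frob_layer_def
      by (intro continuous_on_real_sqrt continuous_on_sum continuous_on_power entry_cont)
        (use k in \<open>auto simp: valid_entry_def\<close>)
  qed auto
  then show ?thesis unfolding eq by (intro closed_INT) auto
qed

lemma SS_sets: "SS R \<in> sets lebesgue"
  using SS_closed by (metis borel_closed sets_completionI_sets sets_lborel)

lemma claim2: assumes R: "0 < R" shows "SS R \<in> lmeasurable"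
proof -
  obtain \<epsilon> where \<epsilon>: "\<epsilon> > 0" and e: "\<forall>t\<ge>1. inB L dims R (W t) \<longrightarrow> grad_W1_norm dims (risk lf n d z L dims) (W t) \<ge> \<epsilon>"
    using claim1[OF R] by auto
  define B where "B = 1 + rr 1 / \<epsilon>\<^sup>2"
  have bound: "measure lebesgue (SS R \<inter> {0..real m}) \<le> B" for m :: nat
  proof -
    define T where "T = real m + 1"
    have T1: "1 \<le> T" unfolding T_def by simp
    define S1 where "S1 = SS R \<inter> {1..T}"
    have cS1: "compact S1" unfolding S1_def using SS_closed by (intro closed_Int_compact) auto
    then have mS1: "S1 \<in> lmeasurable" by (rule lmeasurable_compact)
    have "((\<lambda>t. - gsq (W t)) has_integral (rr T - rr 1)) {1..T}"
    proof (rule fundamental_theorem_of_calculus[OF T1])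
      fix x assume x: "x \<in> {1..T}"
      have "(rr has_real_derivative - gsq (W x)) (at x within {1..T})"
        using rr_deriv[of x] x by (auto intro: DERIV_subset)
      then show "(rr has_vector_derivative - gsq (W x)) (at x within {1..T})"
        by (simp add: has_real_derivative_iff_has_vector_derivative)
    qed
    from has_integral_neg[OF this] have I1: "((\<lambda>t. gsq (W t)) has_integral (rr 1 - rr T)) {1..T}"
      by simp
    have IA: "(indicator S1 has_integral measure lebesgue S1) UNIV"
      using mS1 lmeasurable_iff_indicator_has_integral by blast
    have ieq: "(\<lambda>x. if x \<in> {1..T} then indicator S1 x else (0::real)) = indicator S1"
      unfolding S1_def by (auto simp: fun_eq_iff indicator_def)
    have "((\<lambda>x. if x \<in> {1..T} then indicator S1 x else (0::real)) has_integral measure lebesgue S1) UNIV"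
      by (subst ieq) (rule IA)
    then have "(indicator S1 has_integral measure lebesgue S1) {1..T}"
      by (rule has_integral_restrict_UNIV[THEN iffD1])
    then have I2: "((\<lambda>x. \<epsilon>\<^sup>2 * indicator S1 x) has_integral \<epsilon>\<^sup>2 * measure lebesgue S1) {1..T}"
      by (rule has_integral_mult_right)
    have "\<epsilon>\<^sup>2 * measure lebesgue S1 \<le> rr 1 - rr T"
    proof (rule has_integral_le[OF I2 I1])
      fix x assume x: "x \<in> {1..T}"
      show "\<epsilon>\<^sup>2 * indicator S1 x \<le> gsq (W x)"
      proof (cases "x \<in> S1")
        case True
        then have "\<epsilon> \<le> grad_W1_norm dims (risk lf n d z L dims) (W x)"
          using e x unfolding S1_def SS_def by auto
        then have "\<epsilon>\<^sup>2 \<le> (grad_W1_norm dims (risk lf n d z L dims) (W x))\<^sup>2"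
          using \<epsilon> by (intro power_mono) auto
        then show ?thesis using True gsq_ge[of "W x"] by simp
      next
        case False
        then show ?thesis using gsq_nonneg by simp
      qed
    qed
    moreover have "0 \<le> rr T" unfolding rr_def by (rule risk_nonneg)
    ultimately have "\<epsilon>\<^sup>2 * measure lebesgue S1 \<le> rr 1" by linarith
    then have mS1b: "measure lebesgue S1 \<le> rr 1 / \<epsilon>\<^sup>2"
      using \<epsilon> by (simp add: pos_le_divide_eq mult.commute)
    have sub: "SS R \<inter> {0..real m} \<subseteq> {0..1} \<union> S1"
      unfolding S1_def T_def SS_def by auto
    have "measure lebesgue (SS R \<inter> {0..real m}) \<le> measure lebesgue ({0..1} \<union> S1)"
      using sub mS1 SS_sets by (intro measure_mono_fmeasurable) auto
    also have "\<dots> \<le> measure lebesgue {0..1::real} + measure lebesgue S1"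
      using mS1 by (intro measure_Un_le) auto
    also have "\<dots> \<le> B" using mS1b unfolding B_def by simp
    finally show ?thesis .
  qed
  have inc: "incseq (\<lambda>m::nat. SS R \<inter> {0..real m})"
    by (auto simp: incseq_def)
  have Un: "(\<Union>m::nat. SS R \<inter> {0..real m}) = SS R"
  proof (intro equalityI subsetI)
    fix t assume t: "t \<in> SS R"
    obtain m where "t \<le> real m" using real_arch_simple by blast
    then have "t \<in> SS R \<inter> {0..real m}" using t by (simp add: SS_def)
    then show "t \<in> (\<Union>m::nat. SS R \<inter> {0..real m})" by blast
  qed blast
  have rng: "range (\<lambda>m::nat. SS R \<inter> {0..real m}) \<subseteq> sets lebesgue"
  proof safe
    fix m :: nat
    have "SS R \<inter> {0..real m} \<in> lmeasurable"
      using SS_closed by (intro lmeasurable_compact closed_Int_compact) auto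
    then show "SS R \<inter> {0..real m} \<in> sets lebesgue" by (rule fmeasurableD)
  qed
  have "emeasure lebesgue (SS R) = (SUP m. emeasure lebesgue (SS R \<inter> {0..real m}))"
    using SUP_emeasure_incseq[OF rng inc, unfolded Un] by (rule sym)
  also have "\<dots> \<le> ennreal B"
  proof (rule SUP_least)
    fix m :: nat
    have "SS R \<inter> {0..real m} \<in> lmeasurable"
      using SS_closed by (intro lmeasurable_compact closed_Int_compact) auto
    then show "emeasure lebesgue (SS R \<inter> {0..real m}) \<le> ennreal B"
      using bound[of m] by (simp add: emeasure_eq_measure2 ennreal_leI)
  qed
  also have "\<dots> < \<infinity>" by simp
  finally show ?thesis using SS_sets by (intro fmeasurableI) auto
qed

lemma claim3: "\<not> bdd_above ((\<lambda>t. maxnorm L dims (W t)) ` {0..})"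
proof
  assume "bdd_above ((\<lambda>t. maxnorm L dims (W t)) ` {0..})"
  then obtain M where M: "\<forall>t\<ge>0. maxnorm L dims (W t) \<le> M" by (auto simp: bdd_above_def)
  define R where "R = max M 1"
  have eq: "SS R = {0..}"
  proof (intro equalityI subsetI)
    fix t :: real assume "t \<in> {0..}"
    then have "0 \<le> t" by simp
    then have "maxnorm L dims (W t) \<le> R" using M unfolding R_def by (meson le_max_iff_disj)
    then show "t \<in> SS R" using \<open>0 \<le> t\<close> by (simp add: SS_def inB_def)
  qed (simp add: SS_def)
  have R0: "0 < R" unfolding R_def by simp
  have lm: "{(0::real)..} \<in> lmeasurable" using claim2[OF R0] eq by simp
  define \<mu> where "\<mu> = measure lebesgue {(0::real)..}"
  define m where "m = nat (ceiling \<mu>) + 1"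
  have "measure lebesgue {0..real m} \<le> \<mu>"
    unfolding \<mu>_def using lm by (intro measure_mono_fmeasurable) auto
  moreover have "measure lebesgue {0..real m} = real m" by simp
  moreover have "\<mu> \<le> real (nat (ceiling \<mu>))" by (rule real_nat_ceiling_ge)
  then have "\<mu> < real m" unfolding m_def by simp
  ultimately show False by simp
qed

end

theorem mainTheorem2:
  fixes n d L :: nat
    and dims :: "nat \<Rightarrow> nat"
    and x :: "nat \<Rightarrow> nat \<Rightarrow> real"
    and y :: "nat \<Rightarrow> real"
    and z :: "nat \<Rightarrow> nat \<Rightarrow> real"
    and lf dl :: "real \<Rightarrow> real"
    and W :: "real \<Rightarrow> params"
  assumes L_pos: "1 \<le> L"
    and dims_pos: "\<forall>k. 0 < dims k"
    and dims0: "dims 0 = d"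
    and dimsL: "dims L = 1"
    and x_norm: "\<forall>i<n. sqrt (\<Sum>j<d. (x i j)\<^sup>2) \<le> 1"
    and y_pm: "\<forall>i<n. y i = 1 \<or> y i = -1"
    and z_def: "\<forall>i<n. \<forall>j<d. z i j = y i * x i j"
    and separable: "\<exists>u :: nat \<Rightarrow> real. \<forall>i<n. (\<Sum>j<d. u j * z i j) > 0"
    and l_deriv: "\<forall>s. (lf has_real_derivative dl s) (at s)"
    and dl_cont: "continuous_on UNIV dl"
    and dl_neg: "\<forall>s. dl s < 0"
    and l_bot: "filterlim lf at_top at_bot"
    and l_top: "(lf \<longlongrightarrow> 0) at_top"
    and flow: "\<forall>t\<ge>0. \<forall>k a b. valid_entry L dims k a b \<longrightarrow>
                 ((\<lambda>s. W s k a b) has_real_derivative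
                   - pderiv_entry (risk lf n d z L dims) (W t) k a b) (at t within {0..})"
    and grad0: "\<exists>k a b. valid_entry L dims k a b \<and>
                  pderiv_entry (risk lf n d z L dims) (W 0) k a b \<noteq> 0"
    and risk0: "risk lf n d z L dims (W 0) \<le> lf 0"
  shows "(\<forall>R>0. \<exists>\<epsilon>>0. \<forall>t\<ge>1. inB L dims R (W t) \<longrightarrow>
            grad_W1_norm dims (risk lf n d z L dims) (W t) \<ge> \<epsilon>)
       \<and> (\<forall>R>0. {t. 0 \<le> t \<and> inB L dims R (W t)} \<in> lmeasurable)
       \<and> \<not> bdd_above ((\<lambda>t. maxnorm L dims (W t)) ` {0..})"
  proof -
  interpret net n d L dims z lf dl
    using L_pos dims0 dims_pos l_deriv by unfold_locales auto
  obtain u where u: "\<forall>i<n. (\<Sum>j<d. u j * z i j) > 0" using separable by blast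
  interpret flowsys n d L dims z lf dl W u
    using flow grad0 risk0 dl_cont dl_neg l_top u by unfold_locales auto
  show ?thesis using claim1 claim2 claim3 unfolding SS_def by blast
qed

end
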